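(* Fix an integer $d\ge 2$ and $k\in\mathbb{N}$. For every point $(p,q)$ on the critical curve $\gamma_k$, i.e. for every $p\in[0,d^{-1}]$ and $q=q_c(p,k)$, we have $\mathbb{P}_{p,q}(o\leadsto\infty)=0$.
   Context: Let $[d]=\{1,\dots,d\}$ and $[d]_\star=\bigcup_{n\ge 0}[d]^n$ (finite sequences, $[d]^0=\{o\}$ with $o$ the empty sequence), with concatenation $u\cdot v$. For $k\in\mathbb{N}$, $\mathbb{T}_{d,k}$ is the oriented graph with vertex set $[d]_\star$ and oriented edges $\langle u,u\cdot a\rangle$ for $u\in[d]_\star$, $a\in[d]$ ("short edges") and $\langle u,u\cdot r\rangle$ for $u\in[d]_\star$, $r\in[d]^k$ ("long edges"). Under $\mathbb{P}_{p,q}$, independently, each short edge is open with probability $p$ and each long edge is open with probability $q$. The event $o\leadsto\infty$ means that there are infinitely many vertices $v$ reachable from $o$ by a path $o=u^0,u^1,\dots,u^n=v$ with each oriented edge $\langle u^j,u^{j+1}\rangle$ open. Let $\mathcal{P}_k=\{(p,q)\in[0,1]^2:\mathbb{P}_{p,q}(o\leadsto\infty)>0\}$, $\mathcal{N}_k=[0,1]^2\setminus\mathcal{P}_k$ and $q_c(p,k)=\inf\{q:(p,q)\in\mathcal{P}_k\}$. The critical curve $\gamma_k$ is the curve separating $\mathcal{N}_k$ from $\mathcal{P}_k$, joining $(d^{-1},0)$ and $(0,d^{-k})$; it is the graph $\{(p,q_c(p,k)):p\in[0,d^{-1}]\}$. *)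

theory Defs
  imports "HOL-Probability.Probability"
begin

text \<open>Edges are indexed by (is_short, u, r): the oriented edge from u to u @ r, where
  r = [a] with a in [d] for a short edge, and r in [d]^k for a long edge.
  The tag keeps short and long edges distinct (relevant when k = 1).\<close>

type_synonym edge = "bool \<times> nat list \<times> nat list"

definition vertices :: "nat \<Rightarrow> nat list set" where
  "vertices d = lists {1..d}"

definition short_edges :: "nat \<Rightarrow> edge set" where
  "short_edges d = {(True, u, [a]) | u a. u \<in> vertices d \<and> a \<in> {1..d}}"

definition long_edges :: "nat \<Rightarrow> nat \<Rightarrow> edge set" where
  "long_edges d k = {(False, u, r) | u r. u \<in> vertices d \<and> r \<in> vertices d \<and> length r = k}"

definition edges :: "nat \<Rightarrow> nat \<Rightarrow> edge set" where
  "edges d k = short_edges d \<union> long_edges d k"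

definition perc :: "nat \<Rightarrow> nat \<Rightarrow> real \<Rightarrow> real \<Rightarrow> (edge \<Rightarrow> bool) measure" where
  "perc d k p q = (\<Pi>\<^sub>M e\<in>edges d k. measure_pmf (bernoulli_pmf (if fst e then p else q)))"

inductive reach :: "nat \<Rightarrow> nat \<Rightarrow> (edge \<Rightarrow> bool) \<Rightarrow> nat list \<Rightarrow> bool"
  for d k \<omega> where
  root: "reach d k \<omega> []"
| step: "reach d k \<omega> u \<Longrightarrow> (b, u, r) \<in> edges d k \<Longrightarrow> \<omega> (b, u, r) \<Longrightarrow> reach d k \<omega> (u @ r)"

definition perc_event :: "nat \<Rightarrow> nat \<Rightarrow> (edge \<Rightarrow> bool) set" where
  "perc_event d k = {\<omega>. infinite {v. reach d k \<omega> v}}"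

definition Pk :: "nat \<Rightarrow> nat \<Rightarrow> (real \<times> real) set" where
  "Pk d k = {(p, q). 0 \<le> p \<and> p \<le> 1 \<and> 0 \<le> q \<and> q \<le> 1 \<and>
      measure (perc d k p q) (perc_event d k \<inter> space (perc d k p q)) > 0}"

definition q_c :: "nat \<Rightarrow> nat \<Rightarrow> real \<Rightarrow> real" where
  "q_c d k p = Inf {q. (p, q) \<in> Pk d k}"

end

theory Submission
  imports Defs
begin


definition dep_on :: "'i set \<Rightarrow> 'i set \<Rightarrow> (('i \<Rightarrow> bool) \<Rightarrow> bool) \<Rightarrow> bool" where
  "dep_on I K Q \<longleftrightarrow> (\<forall>\<omega>\<in>PiE I (\<lambda>_. UNIV). \<forall>\<omega>'\<in>PiE I (\<lambda>_. UNIV). (\<forall>e\<in>K. \<omega> e = \<omega>' e) \<longrightarrow> Q \<omega> = Q \<omega>')"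

locale bprod =
  fixes I :: "'i set" and P :: "'i \<Rightarrow> bool pmf"
begin

abbreviation "PM \<equiv> PiM I (\<lambda>i. measure_pmf (P i))"

lemma pps: "product_prob_space (\<lambda>i. measure_pmf (P i))"
  by unfold_locales

lemma ps: "prob_space PM"
proof -
  interpret product_prob_space "\<lambda>i. measure_pmf (P i)" I by (rule pps)
  show ?thesis by unfold_locales
qed

lemma space_PM: "space PM = PiE I (\<lambda>_. UNIV)"
  by (simp add: space_PiM)


lemma finite_sets:
  assumes "finite K" "S \<subseteq> space (PiM K (\<lambda>i. measure_pmf (P i)))"
  shows "S \<in> sets (PiM K (\<lambda>i. measure_pmf (P i)))"
proof -
  have fin: "finite S"
    using assms by (intro finite_subset[OF assms(2)]) (auto simp: space_PiM intro!: finite_PiE)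
  have "S = (\<Union>x\<in>S. PiE K (\<lambda>i. {x i}))"
  proof
    show "S \<subseteq> (\<Union>x\<in>S. PiE K (\<lambda>i. {x i}))" using assms(2)
      by (auto simp: space_PiM PiE_def extensional_def)
    show "(\<Union>x\<in>S. PiE K (\<lambda>i. {x i})) \<subseteq> S" using assms(2)
    proof safe
      fix x y assume "x \<in> S" "y \<in> PiE K (\<lambda>i. {x i})"
      moreover have "x \<in> PiE K (\<lambda>_. UNIV)" using \<open>x \<in> S\<close> assms(2) by (auto simp: space_PiM)
      ultimately have "y = x" by (auto simp: PiE_def extensional_def fun_eq_iff)
      then show "y \<in> S" using \<open>x \<in> S\<close> by simp
    qed
  qed
  also have "\<dots> \<in> sets (PiM K (\<lambda>i. measure_pmf (P i)))"
    using fin assms(1) by (intro sets.finite_UN ballI sets_PiM_I_finite) auto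
  finally show ?thesis .
qed

lemma indep_coord:
  assumes "I \<noteq> {}"
  shows "prob_space.indep_vars PM (\<lambda>i. measure_pmf (P i)) (\<lambda>i \<omega>. \<omega> i) I"
proof -
  interpret product_prob_space "\<lambda>i. measure_pmf (P i)" I by (rule pps)
  have "distr PM PM (\<lambda>x. \<lambda>i\<in>I. x i) = distr PM PM (\<lambda>x. x)"
    by (rule distr_cong) (auto simp: space_PiM PiE_def extensional_def restrict_def fun_eq_iff)
  also have "\<dots> = PM" by simp
  also have "\<dots> = PiM I (\<lambda>i. distr PM (measure_pmf (P i)) (\<lambda>\<omega>. \<omega> i))"
    by (rule PiM_cong) (auto simp: PiM_component)
  finally have eq: "distr PM PM (\<lambda>x. \<lambda>i\<in>I. x i) = PiM I (\<lambda>i. distr PM (measure_pmf (P i)) (\<lambda>\<omega>. \<omega> i))" .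
  have rv: "\<And>i. i \<in> I \<Longrightarrow> (\<lambda>\<omega>. \<omega> i) \<in> measurable PM (measure_pmf (P i))"
    by (rule measurable_component_singleton)
  have "indep_vars (\<lambda>i. measure_pmf (P i)) (\<lambda>i \<omega>. \<omega> i) I \<longleftrightarrow>
     distr PM (PiM I (\<lambda>i. measure_pmf (P i))) (\<lambda>x. \<lambda>i\<in>I. x i) = PiM I (\<lambda>i. distr PM (measure_pmf (P i)) (\<lambda>\<omega>. \<omega> i))"
    by (rule indep_vars_iff_distr_eq_PiM'[OF assms rv])
  then show ?thesis using eq by blast
qed

definition "SS K Q = {\<eta>\<in>space (PiM K (\<lambda>i. measure_pmf (P i))). \<exists>\<omega>\<in>space PM. restrict \<omega> K = \<eta> \<and> Q \<omega>}"

lemma SS_eq: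
  assumes "dep_on I K Q"
  shows "{\<omega>\<in>space PM. Q \<omega>} = (\<lambda>\<omega>. restrict \<omega> K) -` SS K Q \<inter> space PM"
proof (intro set_eqI iffI)
  fix \<omega> assume "\<omega> \<in> {\<omega>\<in>space PM. Q \<omega>}"
  then show "\<omega> \<in> (\<lambda>\<omega>. restrict \<omega> K) -` SS K Q \<inter> space PM"
    unfolding SS_def by (auto simp: space_PiM)
next
  fix \<omega> assume a: "\<omega> \<in> (\<lambda>\<omega>. restrict \<omega> K) -` SS K Q \<inter> space PM"
  then obtain \<omega>' where "\<omega>' \<in> space PM" "restrict \<omega>' K = restrict \<omega> K" "Q \<omega>'"
    unfolding SS_def by auto
  moreover have "\<forall>e\<in>K. \<omega>' e = \<omega> e"
  proof
    fix e assume "e \<in> K"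
    then have "restrict \<omega>' K e = restrict \<omega> K e" using \<open>restrict \<omega>' K = restrict \<omega> K\<close> by simp
    then show "\<omega>' e = \<omega> e" using \<open>e \<in> K\<close> by simp
  qed
  moreover have "\<omega> \<in> space PM" using a by blast
  ultimately have "Q \<omega>' = Q \<omega>" using assms unfolding dep_on_def space_PM by blast
  then show "\<omega> \<in> {\<omega>\<in>space PM. Q \<omega>}" using \<open>Q \<omega>'\<close> \<open>\<omega> \<in> space PM\<close> by blast
qed

lemma SS_sets: "finite K \<Longrightarrow> SS K Q \<in> sets (PiM K (\<lambda>i. measure_pmf (P i)))"
  by (rule finite_sets) (auto simp: SS_def)

lemma meas:
  assumes "K \<subseteq> I" "finite K" "dep_on I K Q"
  shows "{\<omega>\<in>space PM. Q \<omega>} \<in> sets PM"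
  unfolding SS_eq[OF assms(3)]
  by (rule measurable_sets[OF measurable_restrict_subset[OF assms(1)]]) (rule SS_sets[OF assms(2)])

lemma prod_indep:
  assumes A: "finite A" "A \<noteq> {}" and K: "\<And>a. a \<in> A \<Longrightarrow> K a \<subseteq> I \<and> finite (K a) \<and> dep_on I (K a) (Q a)"
    and disj: "disjoint_family_on K A" and Ine: "I \<noteq> {}"
  shows "measure PM {\<omega>\<in>space PM. \<forall>a\<in>A. Q a \<omega>} = (\<Prod>a\<in>A. measure PM {\<omega>\<in>space PM. Q a \<omega>})"
proof -
  interpret product_prob_space "\<lambda>i. measure_pmf (P i)" I by (rule pps)
  have iv: "indep_vars (\<lambda>a. PiM (K a) (\<lambda>i. measure_pmf (P i))) (\<lambda>a \<omega>. restrict (\<lambda>i. \<omega> i) (K a)) A"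
    by (rule indep_vars_restrict[OF indep_coord[OF Ine]]) (use K disj in blast)+
  have "prob (\<Inter>a\<in>A. (\<lambda>\<omega>. restrict (\<lambda>i. \<omega> i) (K a)) -` SS (K a) (Q a) \<inter> space PM)
     = (\<Prod>a\<in>A. prob ((\<lambda>\<omega>. restrict (\<lambda>i. \<omega> i) (K a)) -` SS (K a) (Q a) \<inter> space PM))"
    by (rule indep_varsD_finite[OF iv A(2) A(1)]) (use K SS_sets in blast)
  moreover have "\<And>a. a \<in> A \<Longrightarrow> (\<lambda>\<omega>. restrict (\<lambda>i. \<omega> i) (K a)) -` SS (K a) (Q a) \<inter> space PM = {\<omega>\<in>space PM. Q a \<omega>}"
    using SS_eq K by blast
  ultimately have "prob (\<Inter>a\<in>A. {\<omega>\<in>space PM. Q a \<omega>}) = (\<Prod>a\<in>A. prob {\<omega>\<in>space PM. Q a \<omega>})"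
    by (simp cong: INF_cong prod.cong)
  moreover have "(\<Inter>a\<in>A. {\<omega>\<in>space PM. Q a \<omega>}) = {\<omega>\<in>space PM. \<forall>a\<in>A. Q a \<omega>}"
    using A(2) by auto
  ultimately show ?thesis by simp
qed

lemma prob_coord:
  assumes "i \<in> I"
  shows "measure PM {\<omega>\<in>space PM. \<omega> i} = pmf (P i) True"
proof -
  interpret product_prob_space "\<lambda>i. measure_pmf (P i)" I by (rule pps)
  have "{\<omega>\<in>space PM. \<omega> i} = prod_emb I (\<lambda>i. measure_pmf (P i)) {i} (PiE {i} (\<lambda>_. {True}))"
  proof (intro set_eqI iffI)
    fix \<omega> assume "\<omega> \<in> {\<omega>\<in>space PM. \<omega> i}"
    then show "\<omega> \<in> prod_emb I (\<lambda>i. measure_pmf (P i)) {i} (PiE {i} (\<lambda>_. {True}))"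
      by (auto simp: prod_emb_def space_PiM)
  next
    fix \<omega> assume "\<omega> \<in> prod_emb I (\<lambda>i. measure_pmf (P i)) {i} (PiE {i} (\<lambda>_. {True}))"
    then have "\<omega> \<in> space PM" "restrict \<omega> {i} \<in> PiE {i} (\<lambda>_. {True})"
      unfolding prod_emb_def space_PiM[symmetric] by blast+
    moreover have "restrict \<omega> {i} i \<in> {True}" by (rule PiE_mem[OF \<open>restrict \<omega> {i} \<in> PiE {i} (\<lambda>_. {True})\<close>]) simp
    then have "\<omega> i" by simp
    then show "\<omega> \<in> {\<omega>\<in>space PM. \<omega> i}" using \<open>\<omega> \<in> space PM\<close> by blast
  qed
  moreover have "measure PM (prod_emb I (\<lambda>i. measure_pmf (P i)) {i} (PiE {i} (\<lambda>_. {True}))) = (\<Prod>j\<in>{i}. measure (measure_pmf (P j)) {True})"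
    by (rule measure_PiM_emb) (use assms in auto)
  ultimately have "measure PM {\<omega>\<in>space PM. \<omega> i} = (\<Prod>j\<in>{i}. measure (measure_pmf (P j)) {True})"
    by simp
  then show ?thesis by (simp add: measure_pmf_single)
qed


lemma prob_not:
  assumes "K \<subseteq> I" "finite K" "dep_on I K Q"
  shows "measure PM {\<omega>\<in>space PM. \<not> Q \<omega>} = 1 - measure PM {\<omega>\<in>space PM. Q \<omega>}"
proof -
  interpret prob_space PM by (rule ps)
  have "{\<omega>\<in>space PM. \<not> Q \<omega>} = space PM - {\<omega>\<in>space PM. Q \<omega>}" by blast
  then show ?thesis using prob_compl[OF meas[OF assms]] by simp
qed

lemma prob_and2:
  assumes "K1 \<subseteq> I" "finite K1" "dep_on I K1 Q1" "K2 \<subseteq> I" "finite K2" "dep_on I K2 Q2"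
    "K1 \<inter> K2 = {}" "I \<noteq> {}"
  shows "measure PM {\<omega>\<in>space PM. Q1 \<omega> \<and> Q2 \<omega>} = measure PM {\<omega>\<in>space PM. Q1 \<omega>} * measure PM {\<omega>\<in>space PM. Q2 \<omega>}"
proof -
  have "measure PM {\<omega>\<in>space PM. \<forall>b\<in>UNIV. (if b then Q1 else Q2) \<omega>} = (\<Prod>b\<in>UNIV. measure PM {\<omega>\<in>space PM. (if b then Q1 else Q2) \<omega>})"
    by (rule prod_indep[where K="\<lambda>b. if b then K1 else K2"]) (use assms in \<open>auto simp: disjoint_family_on_def\<close>)
  moreover have "{\<omega>\<in>space PM. \<forall>b\<in>UNIV. (if b then Q1 else Q2) \<omega>} = {\<omega>\<in>space PM. Q1 \<omega> \<and> Q2 \<omega>}"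
    by (auto simp: all_bool_eq)
  ultimately show ?thesis by (simp add: UNIV_bool mult.commute)
qed

lemma prob_disj:
  assumes "K1 \<subseteq> I" "finite K1" "dep_on I K1 Q1" "K2 \<subseteq> I" "finite K2" "dep_on I K2 Q2"
    "\<And>\<omega>. \<not> (Q1 \<omega> \<and> Q2 \<omega>)"
  shows "measure PM {\<omega>\<in>space PM. Q1 \<omega> \<or> Q2 \<omega>} = measure PM {\<omega>\<in>space PM. Q1 \<omega>} + measure PM {\<omega>\<in>space PM. Q2 \<omega>}"
proof -
  interpret prob_space PM by (rule ps)
  have "{\<omega>\<in>space PM. Q1 \<omega> \<or> Q2 \<omega>} = {\<omega>\<in>space PM. Q1 \<omega>} \<union> {\<omega>\<in>space PM. Q2 \<omega>}" by blast
  moreover have "{\<omega>\<in>space PM. Q1 \<omega>} \<inter> {\<omega>\<in>space PM. Q2 \<omega>} = {}" using assms(7) by blast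
  ultimately show ?thesis
    using finite_measure_Union[OF meas[OF assms(1-3)] meas[OF assms(4-6)]] by simp
qed

end

lemma dep_mono: "dep_on I K Q \<Longrightarrow> K \<subseteq> K' \<Longrightarrow> dep_on I K' Q"
  unfolding dep_on_def by blast

lemma dep_not: "dep_on I K Q \<Longrightarrow> dep_on I K (\<lambda>\<omega>. \<not> Q \<omega>)"
  unfolding dep_on_def by blast

lemma dep_conj: "dep_on I K Q1 \<Longrightarrow> dep_on I K Q2 \<Longrightarrow> dep_on I K (\<lambda>\<omega>. Q1 \<omega> \<and> Q2 \<omega>)"
  unfolding dep_on_def by blast

lemma dep_disj: "dep_on I K Q1 \<Longrightarrow> dep_on I K Q2 \<Longrightarrow> dep_on I K (\<lambda>\<omega>. Q1 \<omega> \<or> Q2 \<omega>)"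
  unfolding dep_on_def by blast

lemma dep_ball: "(\<And>a. a \<in> A \<Longrightarrow> dep_on I K (Q a)) \<Longrightarrow> dep_on I K (\<lambda>\<omega>. \<forall>a\<in>A. Q a \<omega>)"
  unfolding dep_on_def by blast

lemma dep_bex: "(\<And>a. a \<in> A \<Longrightarrow> dep_on I K (Q a)) \<Longrightarrow> dep_on I K (\<lambda>\<omega>. \<exists>a\<in>A. Q a \<omega>)"
  unfolding dep_on_def by blast

lemma dep_coord: "e \<in> K \<Longrightarrow> dep_on I K (\<lambda>\<omega>. \<omega> e)"
  unfolding dep_on_def by blast

lemma dep_const: "dep_on I K (\<lambda>\<omega>. c)"
  unfolding dep_on_def by blast


definition tgt :: "edge \<Rightarrow> nat list" where "tgt e = fst (snd e) @ snd (snd e)"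

definition lg :: "nat \<Rightarrow> nat list \<Rightarrow> nat \<Rightarrow> edge" where
  "lg k v a = (False, take (length v + 1 - k) (v @ [a]), drop (length v + 1 - k) (v @ [a]))"

definition nxt :: "nat \<Rightarrow> nat list \<Rightarrow> bool list \<Rightarrow> (edge \<Rightarrow> bool) \<Rightarrow> nat \<Rightarrow> bool list" where
  "nxt k v \<sigma> \<omega> a = ((hd \<sigma> \<and> \<omega> (True, v, [a])) \<or> (last \<sigma> \<and> \<omega> (lg k v a))) # butlast \<sigma>"

fun st :: "nat \<Rightarrow> nat list \<Rightarrow> bool list \<Rightarrow> (edge \<Rightarrow> bool) \<Rightarrow> nat list \<Rightarrow> bool list" where
  "st k v \<sigma> \<omega> [] = \<sigma>"
| "st k v \<sigma> \<omega> (a # x) = st k (v @ [a]) (nxt k v \<sigma> \<omega> a) \<omega> x"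

definition Ev :: "nat \<Rightarrow> nat \<Rightarrow> nat list \<Rightarrow> bool list \<Rightarrow> nat \<Rightarrow> (edge \<Rightarrow> bool) \<Rightarrow> bool" where
  "Ev d k v \<sigma> n \<omega> \<longleftrightarrow> (\<exists>x\<in>lists {1..d}. length x = n \<and> True \<in> set (st k v \<sigma> \<omega> x))"

definition Kset :: "nat \<Rightarrow> nat \<Rightarrow> nat list \<Rightarrow> nat \<Rightarrow> edge set" where
  "Kset d k v n = {e \<in> edges d k. \<exists>y. tgt e = v @ y \<and> 1 \<le> length y \<and> length y \<le> n}"

definition K0 :: "nat \<Rightarrow> nat \<Rightarrow> nat list \<Rightarrow> edge set" where
  "K0 d k c = {e \<in> edges d k. tgt e = c}"

lemma Ev_0: "Ev d k v \<sigma> 0 \<omega> \<longleftrightarrow> True \<in> set \<sigma>"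
  by (auto simp: Ev_def)

lemma Ev_Suc: "Ev d k v \<sigma> (Suc n) \<omega> \<longleftrightarrow> (\<exists>a\<in>{1..d}. Ev d k (v @ [a]) (nxt k v \<sigma> \<omega> a) n \<omega>)"
proof
  assume "Ev d k v \<sigma> (Suc n) \<omega>"
  then obtain x where "x \<in> lists {1..d}" "length x = Suc n" "True \<in> set (st k v \<sigma> \<omega> x)"
    unfolding Ev_def by blast
  then obtain a x' where "x = a # x'" by (cases x) auto
  then show "\<exists>a\<in>{1..d}. Ev d k (v @ [a]) (nxt k v \<sigma> \<omega> a) n \<omega>"
    using \<open>x \<in> lists {1..d}\<close> \<open>length x = Suc n\<close> \<open>True \<in> set (st k v \<sigma> \<omega> x)\<close>
    unfolding Ev_def by auto
next
  assume "\<exists>a\<in>{1..d}. Ev d k (v @ [a]) (nxt k v \<sigma> \<omega> a) n \<omega>"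
  then obtain a x where "a \<in> {1..d}" "x \<in> lists {1..d}" "length x = n"
     "True \<in> set (st k (v @ [a]) (nxt k v \<sigma> \<omega> a) \<omega> x)"
    unfolding Ev_def by blast
  then show "Ev d k v \<sigma> (Suc n) \<omega>" unfolding Ev_def
    by (intro bexI[of _ "a # x"]) auto
qed

lemma edges_short: "v \<in> lists {1..d} \<Longrightarrow> a \<in> {1..d} \<Longrightarrow> (True, v, [a]) \<in> edges d k"
  by (auto simp: edges_def short_edges_def vertices_def)

lemma edges_lg: "v \<in> lists {1..d} \<Longrightarrow> a \<in> {1..d} \<Longrightarrow> k \<le> length v + 1 \<Longrightarrow> lg k v a \<in> edges d k"
  unfolding edges_def long_edges_def vertices_def lg_def
  by (auto dest: in_set_takeD in_set_dropD)

lemma tgt_short: "tgt (True, v, [a]) = v @ [a]" by (simp add: tgt_def)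
lemma tgt_lg: "tgt (lg k v a) = v @ [a]" unfolding tgt_def lg_def by (simp only: fst_conv snd_conv append_take_drop_id)

lemma edges_tgt_lists: "e \<in> edges d k \<Longrightarrow> tgt e \<in> lists {1..d}"
  by (auto simp: edges_def short_edges_def long_edges_def vertices_def tgt_def)

lemma st_dep:
  assumes "\<omega> \<in> PiE (edges d k) (\<lambda>_. UNIV)" "\<omega>' \<in> PiE (edges d k) (\<lambda>_. UNIV)"
  shows "v \<in> lists {1..d} \<Longrightarrow> x \<in> lists {1..d} \<Longrightarrow> length x \<le> n \<Longrightarrow> (\<forall>e\<in>Kset d k v n. \<omega> e = \<omega>' e)
     \<Longrightarrow> st k v \<sigma> \<omega> x = st k v \<sigma> \<omega>' x"
proof (induction x arbitrary: v \<sigma> n)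
  case Nil
  then show ?case by simp
next
  case (Cons a x)
  then obtain n' where n: "n = Suc n'" by (cases n) auto
  have a: "a \<in> {1..d}" using Cons by simp
  have "(True, v, [a]) \<in> Kset d k v n"
    unfolding Kset_def tgt_short using edges_short[OF Cons.prems(1) a, of k] n
    by (intro CollectI conjI exI[of _ "[a]"]) (auto simp: tgt_short tgt_lg)
  then have s: "\<omega> (True, v, [a]) = \<omega>' (True, v, [a])"
    using Cons.prems(4) by blast
  have l: "\<omega> (lg k v a) = \<omega>' (lg k v a)"
  proof (cases "lg k v a \<in> edges d k")
    case True
    then have "lg k v a \<in> Kset d k v n"
      unfolding Kset_def tgt_lg using n
      by (intro CollectI conjI exI[of _ "[a]"]) (auto simp: tgt_short tgt_lg)
    then show ?thesis using Cons.prems(4) by blast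
  next
    case False
    then show ?thesis using PiE_arb[OF assms(1) False] PiE_arb[OF assms(2) False] by simp
  qed
  have nx: "nxt k v \<sigma> \<omega> a = nxt k v \<sigma> \<omega>' a" unfolding nxt_def using s l by simp
  have sub: "Kset d k (v @ [a]) n' \<subseteq> Kset d k v n"
  proof
    fix e assume "e \<in> Kset d k (v @ [a]) n'"
    then obtain y where "e \<in> edges d k" "tgt e = (v @ [a]) @ y" "1 \<le> length y" "length y \<le> n'"
      unfolding Kset_def by blast
    then show "e \<in> Kset d k v n" unfolding Kset_def n
      by (intro CollectI conjI exI[of _ "a # y"]) auto
  qed
  have "st k (v @ [a]) (nxt k v \<sigma> \<omega>' a) \<omega> x = st k (v @ [a]) (nxt k v \<sigma> \<omega>' a) \<omega>' x"
  proof (rule Cons.IH)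
    show "v @ [a] \<in> lists {1..d}" using Cons.prems(1) a by simp
    show "x \<in> lists {1..d}" using Cons.prems(2) by simp
    show "length x \<le> n'" using Cons.prems(3) n by simp
    show "\<forall>e\<in>Kset d k (v @ [a]) n'. \<omega> e = \<omega>' e" using Cons.prems(4) sub by blast
  qed
  then show ?case using nx by simp
qed

lemma Ev_dep: "v \<in> lists {1..d} \<Longrightarrow> dep_on (edges d k) (Kset d k v n) (Ev d k v \<sigma> n)"
  unfolding dep_on_def
proof (intro ballI impI)
  fix \<omega> \<omega>' :: "edge \<Rightarrow> bool" assume v: "v \<in> lists {1..d}" and w: "\<omega> \<in> PiE (edges d k) (\<lambda>_. UNIV)" "\<omega>' \<in> PiE (edges d k) (\<lambda>_. UNIV)"
    and ag: "\<forall>e\<in>Kset d k v n. \<omega> e = \<omega>' e"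
  have "st k v \<sigma> \<omega> x = st k v \<sigma> \<omega>' x" if "x \<in> lists {1..d}" "length x = n" for x
    using st_dep[OF w v that(1) _ ag] that(2) by simp
  note eq = this
  have "(length x = n \<and> True \<in> set (st k v \<sigma> \<omega> x)) = (length x = n \<and> True \<in> set (st k v \<sigma> \<omega>' x))"
    if "x \<in> lists {1..d}" for x
    using eq[OF that] by (cases "length x = n") simp_all
  then show "Ev d k v \<sigma> n \<omega> = Ev d k v \<sigma> n \<omega>'" unfolding Ev_def by (rule bex_cong[OF refl])
qed

lemma nxt_dep: "v \<in> lists {1..d} \<Longrightarrow> a \<in> {1..d} \<Longrightarrow> dep_on (edges d k) (K0 d k (v @ [a])) (\<lambda>\<omega>. Q (nxt k v \<sigma> \<omega> a))"
  unfolding dep_on_def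
proof (intro ballI impI)
  fix \<omega> \<omega>' :: "edge \<Rightarrow> bool" assume v: "v \<in> lists {1..d}" and a: "a \<in> {1..d}" and w: "\<omega> \<in> PiE (edges d k) (\<lambda>_. UNIV)" "\<omega>' \<in> PiE (edges d k) (\<lambda>_. UNIV)"
    and ag: "\<forall>e\<in>K0 d k (v @ [a]). \<omega> e = \<omega>' e"
  have s: "\<omega> (True, v, [a]) = \<omega>' (True, v, [a])"
    using ag edges_short[OF v a, of k] by (auto simp: K0_def tgt_short)
  have l: "\<omega> (lg k v a) = \<omega>' (lg k v a)"
  proof (cases "lg k v a \<in> edges d k")
    case True
    then have "lg k v a \<in> K0 d k (v @ [a])" unfolding K0_def by (simp add: tgt_lg)
    then show ?thesis using ag by blast
  next
    case False
    then show ?thesis using PiE_arb[OF w(1) False] PiE_arb[OF w(2) False] by simp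
  qed
  show "Q (nxt k v \<sigma> \<omega> a) = Q (nxt k v \<sigma> \<omega>' a)" unfolding nxt_def using s l by simp
qed


definition dec :: "nat \<Rightarrow> bool \<Rightarrow> nat list \<Rightarrow> edge" where
  "dec k b t = (if b then (True, butlast t, [last t]) else (False, take (length t - k) t, drop (length t - k) t))"

lemma dec_edge: "e \<in> edges d k \<Longrightarrow> e = dec k (fst e) (tgt e)"
  by (auto simp: edges_def short_edges_def long_edges_def dec_def tgt_def)

lemma finite_tgt:
  assumes "finite T"
  shows "finite {e \<in> edges d k. tgt e \<in> T}"
proof (rule finite_subset)
  show "{e \<in> edges d k. tgt e \<in> T} \<subseteq> (\<lambda>(b, t). dec k b t) ` (UNIV \<times> T)"
  proof
    fix e assume "e \<in> {e \<in> edges d k. tgt e \<in> T}"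
    then show "e \<in> (\<lambda>(b, t). dec k b t) ` (UNIV \<times> T)"
      using dec_edge[of e d k] by (intro image_eqI[of _ _ "(fst e, tgt e)"]) auto
  qed
  show "finite ((\<lambda>(b, t). dec k b t) ` (UNIV \<times> T))" using assms by simp
qed

lemma finite_Kset: "finite (Kset d k v n)"
proof (rule finite_subset)
  show "Kset d k v n \<subseteq> {e \<in> edges d k. tgt e \<in> {t. set t \<subseteq> {1..d} \<and> length t \<le> length v + n}}"
    unfolding Kset_def using edges_tgt_lists by fastforce
  show "finite {e \<in> edges d k. tgt e \<in> {t. set t \<subseteq> {1..d} \<and> length t \<le> length v + n}}"
    by (intro finite_tgt finite_lists_length_le) simp
qed

lemma finite_K0: "finite (K0 d k c)"
proof (rule finite_subset)
  show "K0 d k c \<subseteq> {e \<in> edges d k. tgt e \<in> {c}}" unfolding K0_def by auto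
  show "finite {e \<in> edges d k. tgt e \<in> {c}}" by (intro finite_tgt) simp
qed

lemma Kset_sub: "Kset d k v n \<subseteq> edges d k" unfolding Kset_def by auto
lemma K0_sub: "K0 d k v \<subseteq> edges d k" unfolding K0_def by auto

lemma K0_Kset_disj: "K0 d k c \<inter> Kset d k c n = {}"
  unfolding K0_def Kset_def by auto

lemma child_disj:
  "disjoint_family_on (\<lambda>a. K0 d k (v @ [a]) \<union> Kset d k (v @ [a]) n) A"
  unfolding disjoint_family_on_def K0_def Kset_def by auto

definition pr :: "real \<Rightarrow> real \<Rightarrow> bool list \<Rightarrow> real" where
  "pr p q \<sigma> = (if hd \<sigma> then (if last \<sigma> then 1 - (1 - p) * (1 - q) else p) else (if last \<sigma> then q else 0))"

fun F :: "nat \<Rightarrow> real \<Rightarrow> real \<Rightarrow> nat \<Rightarrow> bool list \<Rightarrow> real" where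
  "F d p q 0 \<sigma> = (if True \<in> set \<sigma> then 1 else 0)"
| "F d p q (Suc n) \<sigma> = 1 - (1 - (pr p q \<sigma> * F d p q n (True # butlast \<sigma>) + (1 - pr p q \<sigma>) * F d p q n (False # butlast \<sigma>))) ^ d"

definition valid :: "nat \<Rightarrow> nat list \<Rightarrow> bool list \<Rightarrow> bool" where
  "valid k v \<sigma> \<longleftrightarrow> length \<sigma> = k \<and> (\<forall>i<k. length v < i \<longrightarrow> \<not> \<sigma> ! i)"

lemma valid_child:
  assumes "valid k v \<sigma>" "1 \<le> k"
  shows "valid k (v @ [a]) (b # butlast \<sigma>)"
  unfolding valid_def
proof (intro conjI allI impI)
  show "length (b # butlast \<sigma>) = k" using assms by (auto simp: valid_def)
  fix i assume i: "i < k" "length (v @ [a]) < i"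
  then obtain j where j: "i = Suc j" by (cases i) auto
  have "(b # butlast \<sigma>) ! i = butlast \<sigma> ! j" using j by simp
  also have "\<dots> = \<sigma> ! j" using assms i j by (intro nth_butlast) (auto simp: valid_def)
  finally show "\<not> (b # butlast \<sigma>) ! i" using assms i j by (auto simp: valid_def)
qed

lemma valid_last:
  assumes "valid k v \<sigma>" "1 \<le> k" "last \<sigma>"
  shows "k \<le> length v + 1"
proof (rule ccontr)
  assume "\<not> k \<le> length v + 1"
  have "\<sigma> \<noteq> []" using assms by (auto simp: valid_def)
  then have "last \<sigma> = \<sigma> ! (k - 1)" using assms by (simp add: last_conv_nth valid_def)
  then show False using assms \<open>\<not> k \<le> length v + 1\<close> by (auto simp: valid_def)
qed


abbreviation Pb :: "real \<Rightarrow> real \<Rightarrow> edge \<Rightarrow> bool pmf" where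
  "Pb p q \<equiv> (\<lambda>e. bernoulli_pmf (if fst e then p else q))"

lemma perc_eq: "perc d k p q = bprod.PM (edges d k) (Pb p q)"
  by (simp add: perc_def)

lemma edges_ne: "1 \<le> d \<Longrightarrow> edges d k \<noteq> {}"
  using edges_short[of "[]" d 1 k] by auto

lemma hd_nxt: "hd (nxt k v \<sigma> \<omega> a) = ((hd \<sigma> \<and> \<omega> (True, v, [a])) \<or> (last \<sigma> \<and> \<omega> (lg k v a)))"
  by (simp add: nxt_def)

lemma nxt_split: "nxt k v \<sigma> \<omega> a = hd (nxt k v \<sigma> \<omega> a) # butlast \<sigma>"
  by (simp add: nxt_def)

context
  fixes d k :: nat and p q :: real
  assumes p: "0 \<le> p" "p \<le> 1" and q: "0 \<le> q" "q \<le> 1" and k: "1 \<le> k" and d: "1 \<le> d"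
begin

interpretation bprod "edges d k" "Pb p q" .

lemma prob_R:
  assumes v: "v \<in> lists {1..d}" and a: "a \<in> {1..d}" and val: "valid k v \<sigma>"
  shows "measure PM {\<omega>\<in>space PM. hd (nxt k v \<sigma> \<omega> a)} = pr p q \<sigma>"
proof -
  define s where "s = (True, v, [a])"
  define t where "t = lg k v a"
  have eq: "hd (nxt k v \<sigma> \<omega> a) = ((hd \<sigma> \<and> \<omega> s) \<or> (last \<sigma> \<and> \<omega> t))" for \<omega>
    unfolding hd_nxt s_def t_def by (rule refl)
  have s: "s \<in> edges d k" unfolding s_def by (rule edges_short[OF v a])
  have "pmf (Pb p q s) True = p" using p unfolding s_def by simp
  then have ps: "measure PM {\<omega>\<in>space PM. \<omega> s} = p"
    using prob_coord[OF s] by simp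
  have st: "s \<noteq> t" unfolding s_def t_def lg_def by simp
  show ?thesis
  proof (cases "last \<sigma>")
    case True
    have t: "t \<in> edges d k" unfolding t_def by (rule edges_lg[OF v a valid_last[OF val k True]])
    have "pmf (Pb p q t) True = q" using q unfolding t_def lg_def by simp
    then have pt: "measure PM {\<omega>\<in>space PM. \<omega> t} = q"
      using prob_coord[OF t] by simp
    show ?thesis
    proof (cases "hd \<sigma>")
      case True
      have ds: "dep_on (edges d k) {s} (\<lambda>\<omega>. \<omega> s)" by (rule dep_coord) simp
      have dt: "dep_on (edges d k) {t} (\<lambda>\<omega>. \<omega> t)" by (rule dep_coord) simp
      have e1: "{\<omega>\<in>space PM. hd (nxt k v \<sigma> \<omega> a)} = {\<omega>\<in>space PM. \<not> (\<not> \<omega> s \<and> \<not> \<omega> t)}"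
        using \<open>hd \<sigma>\<close> \<open>last \<sigma>\<close> by (simp only: eq) simp
      have "measure PM {\<omega>\<in>space PM. \<not> (\<not> \<omega> s \<and> \<not> \<omega> t)} = 1 - measure PM {\<omega>\<in>space PM. \<not> \<omega> s \<and> \<not> \<omega> t}"
      proof (rule prob_not[of "{s, t}"])
        show "{s, t} \<subseteq> edges d k" using s t by simp
        show "finite {s, t}" by simp
        show "dep_on (edges d k) {s, t} (\<lambda>\<omega>. \<not> \<omega> s \<and> \<not> \<omega> t)"
          by (intro dep_conj dep_not dep_coord) simp_all
      qed
      also have "measure PM {\<omega>\<in>space PM. \<not> \<omega> s \<and> \<not> \<omega> t} = measure PM {\<omega>\<in>space PM. \<not> \<omega> s} * measure PM {\<omega>\<in>space PM. \<not> \<omega> t}"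
        by (rule prob_and2[OF _ _ dep_not[OF ds] _ _ dep_not[OF dt]]) (use s t st edges_ne[OF d] in simp_all)
      also have "measure PM {\<omega>\<in>space PM. \<not> \<omega> s} = 1 - p"
        using prob_not[of "{s}", OF _ _ ds] s ps by simp
      also have "measure PM {\<omega>\<in>space PM. \<not> \<omega> t} = 1 - q"
        using prob_not[of "{t}", OF _ _ dt] t pt by simp
      finally show ?thesis unfolding e1 pr_def using \<open>hd \<sigma>\<close> \<open>last \<sigma>\<close> by simp
    next
      case False
      have e1: "{\<omega>\<in>space PM. hd (nxt k v \<sigma> \<omega> a)} = {\<omega>\<in>space PM. \<omega> t}"
        using \<open>\<not> hd \<sigma>\<close> \<open>last \<sigma>\<close> by (simp only: eq) simp
      show ?thesis unfolding e1 pr_def using pt \<open>\<not> hd \<sigma>\<close> \<open>last \<sigma>\<close> by simp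
    qed
  next
    case False
    show ?thesis
    proof (cases "hd \<sigma>")
      case True
      have e1: "{\<omega>\<in>space PM. hd (nxt k v \<sigma> \<omega> a)} = {\<omega>\<in>space PM. \<omega> s}"
        using \<open>hd \<sigma>\<close> \<open>\<not> last \<sigma>\<close> by (simp only: eq) simp
      show ?thesis unfolding e1 pr_def using ps \<open>hd \<sigma>\<close> \<open>\<not> last \<sigma>\<close> by simp
    next
      case False
      have e1: "{\<omega>\<in>space PM. hd (nxt k v \<sigma> \<omega> a)} = {}"
        using \<open>\<not> hd \<sigma>\<close> \<open>\<not> last \<sigma>\<close> by (simp only: eq) simp
      show ?thesis unfolding e1 pr_def using \<open>\<not> hd \<sigma>\<close> \<open>\<not> last \<sigma>\<close> by simp
    qed
  qed
qed

lemma main: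
  "v \<in> lists {1..d} \<Longrightarrow> valid k v \<sigma> \<Longrightarrow> measure PM {\<omega>\<in>space PM. Ev d k v \<sigma> n \<omega>} = F d p q n \<sigma>"
proof (induction n arbitrary: v \<sigma>)
  case 0
  interpret prob_space PM by (rule ps)
  show ?case
  proof (cases "True \<in> set \<sigma>")
    case True
    then have "{\<omega>\<in>space PM. Ev d k v \<sigma> 0 \<omega>} = space PM" by (simp add: Ev_0)
    then show ?thesis using True by (simp add: prob_space)
  next
    case False
    then have e: "{\<omega>\<in>space PM. Ev d k v \<sigma> 0 \<omega>} = {}" by (simp add: Ev_0)
    show ?thesis unfolding e using False by simp
  qed
next
  case (Suc n)
  define G where "G = (\<lambda>a \<omega>. Ev d k (v @ [a]) (nxt k v \<sigma> \<omega> a) n \<omega>)"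
  define g where "g = pr p q \<sigma> * F d p q n (True # butlast \<sigma>) + (1 - pr p q \<sigma>) * F d p q n (False # butlast \<sigma>)"
  define KK where "KK = (\<lambda>a. K0 d k (v @ [a]) \<union> Kset d k (v @ [a]) n)"
  have fKK: "finite (KK a)" for a unfolding KK_def by (simp add: finite_K0 finite_Kset)
  have sKK: "KK a \<subseteq> edges d k" for a unfolding KK_def using K0_sub Kset_sub by blast
  have vc: "v @ [a] \<in> lists {1..d}" if "a \<in> {1..d}" for a using Suc.prems(1) that by simp
  have Gsplit: "G a \<omega> = ((hd (nxt k v \<sigma> \<omega> a) \<and> Ev d k (v @ [a]) (True # butlast \<sigma>) n \<omega>) \<or>
                       (\<not> hd (nxt k v \<sigma> \<omega> a) \<and> Ev d k (v @ [a]) (False # butlast \<sigma>) n \<omega>))" for a \<omega>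
    unfolding G_def by (subst nxt_split) (cases "hd (nxt k v \<sigma> \<omega> a)", simp_all)
  have dG: "dep_on (edges d k) (KK a) (G a)" if a: "a \<in> {1..d}" for a
  proof -
    have "G a = (\<lambda>\<omega>. (hd (nxt k v \<sigma> \<omega> a) \<and> Ev d k (v @ [a]) (True # butlast \<sigma>) n \<omega>) \<or>
                       (\<not> hd (nxt k v \<sigma> \<omega> a) \<and> Ev d k (v @ [a]) (False # butlast \<sigma>) n \<omega>))"
      by (intro ext) (rule Gsplit)
    moreover have r: "dep_on (edges d k) (KK a) (\<lambda>\<omega>. hd (nxt k v \<sigma> \<omega> a))"
      by (rule dep_mono[OF nxt_dep[OF Suc.prems(1) a]]) (simp add: KK_def)
    moreover have e: "dep_on (edges d k) (KK a) (Ev d k (v @ [a]) b n)" for b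
      by (rule dep_mono[OF Ev_dep[OF vc[OF a]]]) (simp add: KK_def)
    ultimately show ?thesis
      using dep_disj[OF dep_conj[OF r e] dep_conj[OF dep_not[OF r] e]] by simp
  qed
  have pG: "measure PM {\<omega>\<in>space PM. G a \<omega>} = g" if a: "a \<in> {1..d}" for a
  proof -
    let ?R = "\<lambda>\<omega>. hd (nxt k v \<sigma> \<omega> a)"
    let ?E = "\<lambda>b. Ev d k (v @ [a]) (b # butlast \<sigma>) n"
    have dR: "dep_on (edges d k) (K0 d k (v @ [a])) ?R" by (rule nxt_dep[OF Suc.prems(1) a])
    have dE: "dep_on (edges d k) (Kset d k (v @ [a]) n) (?E b)" for b by (rule Ev_dep[OF vc[OF a]])
    have val: "valid k (v @ [a]) (b # butlast \<sigma>)" for b by (rule valid_child[OF Suc.prems(2) k])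
    have s1: "K0 d k (v @ [a]) \<subseteq> KK a" and s2: "Kset d k (v @ [a]) n \<subseteq> KK a" by (simp_all add: KK_def)
    have d1: "dep_on (edges d k) (KK a) (\<lambda>\<omega>. ?R \<omega> \<and> ?E True \<omega>)"
      by (rule dep_conj[OF dep_mono[OF dR s1] dep_mono[OF dE s2]])
    have d2: "dep_on (edges d k) (KK a) (\<lambda>\<omega>. \<not> ?R \<omega> \<and> ?E False \<omega>)"
      by (rule dep_conj[OF dep_not[OF dep_mono[OF dR s1]] dep_mono[OF dE s2]])
    have h0: "{\<omega>\<in>space PM. G a \<omega>} = {\<omega>\<in>space PM. (?R \<omega> \<and> ?E True \<omega>) \<or> (\<not> ?R \<omega> \<and> ?E False \<omega>)}"
      by (simp only: Gsplit)
    have h1: "measure PM {\<omega>\<in>space PM. (?R \<omega> \<and> ?E True \<omega>) \<or> (\<not> ?R \<omega> \<and> ?E False \<omega>)} = measure PM {\<omega>\<in>space PM. ?R \<omega> \<and> ?E True \<omega>} + measure PM {\<omega>\<in>space PM. \<not> ?R \<omega> \<and> ?E False \<omega>}"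
      by (rule prob_disj[OF sKK[of a] fKK[of a] d1 sKK[of a] fKK[of a] d2]) simp
    have h2: "measure PM {\<omega>\<in>space PM. ?R \<omega> \<and> ?E True \<omega>} = measure PM {\<omega>\<in>space PM. ?R \<omega>} * measure PM {\<omega>\<in>space PM. ?E True \<omega>}"
      by (rule prob_and2[OF K0_sub finite_K0 dR Kset_sub finite_Kset dE K0_Kset_disj edges_ne[OF d]])
    have h3: "measure PM {\<omega>\<in>space PM. \<not> ?R \<omega> \<and> ?E False \<omega>} = measure PM {\<omega>\<in>space PM. \<not> ?R \<omega>} * measure PM {\<omega>\<in>space PM. ?E False \<omega>}"
      by (rule prob_and2[OF K0_sub finite_K0 dep_not[OF dR] Kset_sub finite_Kset dE K0_Kset_disj edges_ne[OF d]])
    have h4: "measure PM {\<omega>\<in>space PM. \<not> ?R \<omega>} = 1 - measure PM {\<omega>\<in>space PM. ?R \<omega>}"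
      by (rule prob_not[OF K0_sub finite_K0 dR])
    have h5: "measure PM {\<omega>\<in>space PM. ?R \<omega>} = pr p q \<sigma>"
      by (rule prob_R[OF Suc.prems(1) a Suc.prems(2)])
    have h6: "measure PM {\<omega>\<in>space PM. ?E b \<omega>} = F d p q n (b # butlast \<sigma>)" for b
      by (rule Suc.IH[OF vc[OF a] val])
    show ?thesis unfolding g_def h0 h1 h2 h3 h4 h5 h6 by (rule refl)
  qed
  have j0: "{\<omega>\<in>space PM. Ev d k v \<sigma> (Suc n) \<omega>} = {\<omega>\<in>space PM. \<not> (\<forall>a\<in>{1..d}. \<not> G a \<omega>)}"
    unfolding G_def Ev_Suc by blast
  have j1: "measure PM {\<omega>\<in>space PM. \<not> (\<forall>a\<in>{1..d}. \<not> G a \<omega>)} = 1 - measure PM {\<omega>\<in>space PM. \<forall>a\<in>{1..d}. \<not> G a \<omega>}"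
  proof (rule prob_not[of "\<Union>a\<in>{1..d}. KK a"])
    show "(\<Union>a\<in>{1..d}. KK a) \<subseteq> edges d k" using sKK by blast
    show "finite (\<Union>a\<in>{1..d}. KK a)" using fKK by blast
    show "dep_on (edges d k) (\<Union>a\<in>{1..d}. KK a) (\<lambda>\<omega>. \<forall>a\<in>{1..d}. \<not> G a \<omega>)"
    proof (rule dep_ball)
      fix a assume a: "a \<in> {1..d}"
      show "dep_on (edges d k) (\<Union>a\<in>{1..d}. KK a) (\<lambda>\<omega>. \<not> G a \<omega>)"
        by (rule dep_not[OF dep_mono[OF dG[OF a]]]) (use a in blast)
    qed
  qed
  have j2: "measure PM {\<omega>\<in>space PM. \<forall>a\<in>{1..d}. \<not> G a \<omega>} = (\<Prod>a\<in>{1..d}. measure PM {\<omega>\<in>space PM. \<not> G a \<omega>})"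
  proof (rule prod_indep[where K=KK])
    show "finite {1..d}" by simp
    show "{1..d} \<noteq> {}" using d by simp
    show "KK a \<subseteq> edges d k \<and> finite (KK a) \<and> dep_on (edges d k) (KK a) (\<lambda>\<omega>. \<not> G a \<omega>)" if "a \<in> {1..d}" for a
      using sKK fKK dep_not[OF dG[OF that]] by blast
    show "disjoint_family_on KK {1..d}" unfolding KK_def by (rule child_disj)
    show "edges d k \<noteq> {}" by (rule edges_ne[OF d])
  qed
  have j3: "(\<Prod>a\<in>{1..d}. measure PM {\<omega>\<in>space PM. \<not> G a \<omega>}) = (\<Prod>a\<in>{1..d}. 1 - g)"
    by (rule prod.cong[OF refl]) (simp add: prob_not[OF sKK fKK dG] pG)
  have j4: "(\<Prod>a\<in>{1..d}. 1 - g) = (1 - g) ^ d" by simp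
  have "measure PM {\<omega>\<in>space PM. Ev d k v \<sigma> (Suc n) \<omega>} = 1 - (1 - g) ^ d"
    unfolding j0 j1 j2 j3 j4 by (rule refl)
  then show ?case by (simp only: g_def F.simps)
qed

end


lemma reach_lists: "reach d k \<omega> w \<Longrightarrow> w \<in> lists {1..d}"
  by (induction rule: reach.induct)
     (auto simp: edges_def short_edges_def long_edges_def vertices_def)

lemma reach_snoc:
  assumes k: "1 \<le> k" and v: "v \<in> lists {1..d}" and a: "a \<in> {1..d}"
  shows "reach d k \<omega> (v @ [a]) \<longleftrightarrow> (reach d k \<omega> v \<and> \<omega> (True, v, [a])) \<or>
           (k \<le> length v + 1 \<and> reach d k \<omega> (take (length v + 1 - k) (v @ [a])) \<and> \<omega> (lg k v a))"
proof
  assume "reach d k \<omega> (v @ [a])"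
  then show "(reach d k \<omega> v \<and> \<omega> (True, v, [a])) \<or>
           (k \<le> length v + 1 \<and> reach d k \<omega> (take (length v + 1 - k) (v @ [a])) \<and> \<omega> (lg k v a))"
  proof (cases rule: reach.cases)
    case root then show ?thesis by simp
  next
    case (step u b r)
    show ?thesis
    proof (cases b)
      case True
      then obtain c where "r = [c]" using step(3) by (auto simp: edges_def short_edges_def long_edges_def)
      then have "u = v" "c = a" using step(1) by auto
      then show ?thesis using step True \<open>r = [c]\<close> by auto
    next
      case False
      then have lr: "length r = k" using step(3) by (auto simp: edges_def short_edges_def long_edges_def)
      have len: "length u + k = length v + 1" using step(1) lr by (metis length_append length_append_singleton add.commute Suc_eq_plus1)
      have "u = take (length v + 1 - k) (v @ [a])" "r = drop (length v + 1 - k) (v @ [a])"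
        using step(1) len by (metis add_diff_cancel_right' append_eq_conv_conj)+
      then have "(b, u, r) = lg k v a" using False by (simp add: lg_def)
      then show ?thesis using step len by auto
    qed
  qed
next
  assume h: "(reach d k \<omega> v \<and> \<omega> (True, v, [a])) \<or>
           (k \<le> length v + 1 \<and> reach d k \<omega> (take (length v + 1 - k) (v @ [a])) \<and> \<omega> (lg k v a))"
  then show "reach d k \<omega> (v @ [a])"
  proof
    assume "reach d k \<omega> v \<and> \<omega> (True, v, [a])"
    then show ?thesis using reach.step[of d k \<omega> v True "[a]"] edges_short[OF v a] by auto
  next
    assume h2: "k \<le> length v + 1 \<and> reach d k \<omega> (take (length v + 1 - k) (v @ [a])) \<and> \<omega> (lg k v a)"
    have "lg k v a \<in> edges d k" using edges_lg[OF v a] h2 by simp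
    then have "reach d k \<omega> (take (length v + 1 - k) (v @ [a]) @ drop (length v + 1 - k) (v @ [a]))"
      using reach.step[of d k \<omega> "take (length v + 1 - k) (v @ [a])" False "drop (length v + 1 - k) (v @ [a])"] h2
      by (simp add: lg_def)
    then show ?thesis by (simp del: take_append drop_append)
  qed
qed

definition corr :: "nat \<Rightarrow> nat \<Rightarrow> (edge \<Rightarrow> bool) \<Rightarrow> nat list \<Rightarrow> bool list" where
  "corr d k \<omega> v = map (\<lambda>j. j \<le> length v \<and> reach d k \<omega> (take (length v - j) v)) [0..<k]"

lemma nxt_corr:
  assumes k: "1 \<le> k" and v: "v \<in> lists {1..d}" and a: "a \<in> {1..d}"
  shows "nxt k v (corr d k \<omega> v) \<omega> a = corr d k \<omega> (v @ [a])"
proof -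
  obtain k' where k': "k = Suc k'" using k by (cases k) auto
  define f where "f = (\<lambda>j. j \<le> length v \<and> reach d k \<omega> (take (length v - j) v))"
  have cv: "corr d k \<omega> v = map f [0..<k]" unfolding corr_def f_def by (rule refl)
  have u1: "[0..<k] = 0 # map Suc [0..<k']" unfolding k' by (simp only: upt_conv_Cons zero_less_Suc map_Suc_upt)
  have u2: "[0..<k] = [0..<k'] @ [k']" unfolding k' by (simp only: upt_Suc_append zero_le)
  have hd: "hd (corr d k \<omega> v) = reach d k \<omega> v" unfolding cv u1 f_def by simp
  have lst: "last (corr d k \<omega> v) = (k' \<le> length v \<and> reach d k \<omega> (take (length v - k') v))"
    unfolding cv u2 f_def by simp
  have R: "((hd (corr d k \<omega> v) \<and> \<omega> (True, v, [a])) \<or> (last (corr d k \<omega> v) \<and> \<omega> (lg k v a)))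
         = reach d k \<omega> (v @ [a])"
  proof -
    have e1: "k' \<le> length v \<longleftrightarrow> k \<le> length v + 1" unfolding k' by arith
    have e2: "k \<le> length v + 1 \<Longrightarrow> take (length v + 1 - k) (v @ [a]) = take (length v - k') v"
      unfolding k' by simp
    show ?thesis unfolding hd lst reach_snoc[OF k v a] using e1 e2 by auto
  qed
  have bl: "butlast (corr d k \<omega> v) = map f [0..<k']"
    unfolding cv u2 by simp
  have c2: "corr d k \<omega> (v @ [a]) = reach d k \<omega> (v @ [a]) # map f [0..<k']"
  proof -
    have "take (length v - j) (v @ [a]) = take (length v - j) v" for j by simp
    then show ?thesis unfolding corr_def u1 f_def by simp
  qed
  show ?thesis unfolding nxt_def R bl c2 by (rule refl)
qed

lemma st_corr:
  assumes k: "1 \<le> k"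
  shows "v \<in> lists {1..d} \<Longrightarrow> x \<in> lists {1..d} \<Longrightarrow> st k v (corr d k \<omega> v) \<omega> x = corr d k \<omega> (v @ x)"
proof (induction x arbitrary: v)
  case Nil then show ?case by simp
next
  case (Cons a x)
  then have a: "a \<in> {1..d}" by simp
  have "st k v (corr d k \<omega> v) \<omega> (a # x) = st k (v @ [a]) (corr d k \<omega> (v @ [a])) \<omega> x"
    by (simp add: nxt_corr[OF k Cons.prems(1) a])
  also have "\<dots> = corr d k \<omega> ((v @ [a]) @ x)" by (rule Cons.IH) (use Cons.prems a in simp_all)
  finally show ?case by simp
qed

definition root0 :: "nat \<Rightarrow> bool list" where "root0 k = True # replicate (k - 1) False"

lemma corr_root: "1 \<le> k \<Longrightarrow> corr d k \<omega> [] = root0 k"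
proof -
  assume k: "1 \<le> k"
  obtain k' where k': "k = Suc k'" using k by (cases k) auto
  have "[0..<k] = 0 # [1..<k]" unfolding k' by (simp only: upt_conv_Cons zero_less_Suc One_nat_def)
  moreover have "map (\<lambda>j. j \<le> 0 \<and> reach d k \<omega> []) [1..<k] = replicate (k - 1) False"
  proof -
    have "map (\<lambda>j. j \<le> 0 \<and> reach d k \<omega> []) [1..<k] = map (\<lambda>j. False) [1..<k]"
      by (rule map_cong) auto
    then show ?thesis by (simp add: map_replicate_const)
  qed
  ultimately show ?thesis unfolding corr_def root0_def by (simp add: reach.root)
qed

lemma Ev_root:
  assumes k: "1 \<le> k" and d: "1 \<le> d"
  shows "Ev d k [] (root0 k) n \<omega> \<longleftrightarrow> (\<exists>w. reach d k \<omega> w \<and> length w \<le> n \<and> n < length w + k)"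
proof
  assume "Ev d k [] (root0 k) n \<omega>"
  then obtain x where x: "x \<in> lists {1..d}" "length x = n" "True \<in> set (st k [] (root0 k) \<omega> x)"
    unfolding Ev_def by blast
  then have "True \<in> set (corr d k \<omega> x)" using st_corr[OF k, of "[]" d x \<omega>] corr_root[OF k] by simp
  then obtain j where "j < k" "j \<le> length x" "reach d k \<omega> (take (length x - j) x)"
    unfolding corr_def by auto
  then show "\<exists>w. reach d k \<omega> w \<and> length w \<le> n \<and> n < length w + k"
    using x by (intro exI[of _ "take (length x - j) x"]) auto
next
  assume "\<exists>w. reach d k \<omega> w \<and> length w \<le> n \<and> n < length w + k"
  then obtain w where w: "reach d k \<omega> w" "length w \<le> n" "n < length w + k" by blast
  define x where "x = w @ replicate (n - length w) 1"
  have x: "x \<in> lists {1..d}" using reach_lists[OF w(1)] d by (auto simp: x_def)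
  have lx: "length x = n" using w by (simp add: x_def)
  have "(n - length w) < k \<and> (n - length w) \<le> length x \<and> reach d k \<omega> (take (length x - (n - length w)) x)"
    using w lx by (simp add: x_def)
  then have "True \<in> set (corr d k \<omega> x)" unfolding corr_def
    by (auto intro!: image_eqI[of _ _ "n - length w"])
  then have "True \<in> set (st k [] (root0 k) \<omega> x)"
    using st_corr[OF k, of "[]" d x \<omega>] corr_root[OF k] x by simp
  then show "Ev d k [] (root0 k) n \<omega>" unfolding Ev_def using x lx by blast
qed

lemma reach_prefix:
  assumes k: "1 \<le> k"
  shows "reach d k \<omega> w \<Longrightarrow> m \<le> length w \<Longrightarrow> \<exists>w'. reach d k \<omega> w' \<and> length w' \<le> m \<and> m < length w' + k"
proof (induction rule: reach.induct)
  case root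
  then show ?case using k by (intro exI[of _ "[]"]) (simp add: reach.root)
next
  case (step u b r)
  show ?case
  proof (cases "m \<le> length u")
    case True
    then show ?thesis using step.IH by blast
  next
    case False
    have lr: "length r \<le> k" using step.hyps(2) k by (auto simp: edges_def short_edges_def long_edges_def)
    have ru: "reach d k \<omega> (u @ r)" by (rule reach.step[OF step.hyps])
    show ?thesis
    proof (cases "m < length u + k")
      case True
      then show ?thesis using False step.hyps(1) by (intro exI[of _ u]) simp
    next
      case False
      then have "m = length (u @ r)" using step.prems lr by simp
      then show ?thesis using ru k by (intro exI[of _ "u @ r"]) simp
    qed
  qed
qed

lemma perc_iff:
  assumes k: "1 \<le> k"
  shows "infinite {v. reach d k \<omega> v} \<longleftrightarrow> (\<forall>n. \<exists>w. reach d k \<omega> w \<and> length w \<le> n \<and> n < length w + k)"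
proof
  assume inf: "infinite {v. reach d k \<omega> v}"
  show "\<forall>n. \<exists>w. reach d k \<omega> w \<and> length w \<le> n \<and> n < length w + k"
  proof
    fix n
    have "\<exists>w. reach d k \<omega> w \<and> n \<le> length w"
    proof (rule ccontr)
      assume "\<not> (\<exists>w. reach d k \<omega> w \<and> n \<le> length w)"
      then have "{v. reach d k \<omega> v} \<subseteq> {xs. set xs \<subseteq> {1..d} \<and> length xs \<le> n}"
        using reach_lists by fastforce
      then show False using inf finite_subset[OF _ finite_lists_length_le[of "{1..d}" n]] by auto
    qed
    then obtain w where "reach d k \<omega> w" "n \<le> length w" by blast
    then show "\<exists>w. reach d k \<omega> w \<and> length w \<le> n \<and> n < length w + k"
      by (rule reach_prefix[OF k])
  qed
next
  assume h: "\<forall>n. \<exists>w. reach d k \<omega> w \<and> length w \<le> n \<and> n < length w + k"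
  show "infinite {v. reach d k \<omega> v}"
  proof
    assume fin: "finite {v. reach d k \<omega> v}"
    obtain N where N: "\<And>v. v \<in> {v. reach d k \<omega> v} \<Longrightarrow> length v \<le> N"
      using finite_nat_set_iff_bounded_le[THEN iffD1, OF finite_imageI[OF fin, of length]] by auto
    obtain w where "reach d k \<omega> w" "length w \<le> N + k" "N + k < length w + k" using h by blast
    then show False using N[of w] by simp
  qed
qed

lemma root_dec:
  assumes k: "1 \<le> k" and h: "\<exists>w. reach d k \<omega> w \<and> length w \<le> Suc n \<and> Suc n < length w + k"
  shows "\<exists>w. reach d k \<omega> w \<and> length w \<le> n \<and> n < length w + k"
proof -
  obtain w where w: "reach d k \<omega> w" "length w \<le> Suc n" "Suc n < length w + k" using h by blast
  show ?thesis
  proof (cases "length w \<le> n")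
    case True then show ?thesis using w by auto
  next
    case False then show ?thesis using reach_prefix[OF k w(1), of n] by simp
  qed
qed


definition T :: "nat \<Rightarrow> real \<Rightarrow> real \<Rightarrow> (bool list \<Rightarrow> real) \<Rightarrow> bool list \<Rightarrow> real" where
  "T d p q v \<sigma> = 1 - (1 - (pr p q \<sigma> * v (True # butlast \<sigma>) + (1 - pr p q \<sigma>) * v (False # butlast \<sigma>))) ^ d"

lemma F_Suc_T: "F d p q (Suc n) \<sigma> = T d p q (F d p q n) \<sigma>"
  by (simp add: T_def)

lemma pr_bounds: "0 \<le> p \<Longrightarrow> p \<le> 1 \<Longrightarrow> 0 \<le> q \<Longrightarrow> q \<le> 1 \<Longrightarrow> 0 \<le> pr p q \<sigma> \<and> pr p q \<sigma> \<le> 1"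
  unfolding pr_def by (auto simp: mult_le_one mult_nonneg_nonneg)

lemma h_range: "0 \<le> (x::real) \<Longrightarrow> x \<le> 1 \<Longrightarrow> 0 \<le> 1 - (1 - x) ^ d \<and> 1 - (1 - x) ^ d \<le> 1"
  by (auto simp: power_le_one)

lemma h_mono: "0 \<le> (x::real) \<Longrightarrow> x \<le> y \<Longrightarrow> y \<le> 1 \<Longrightarrow> 1 - (1 - x) ^ d \<le> 1 - (1 - y) ^ d"
  by (simp add: power_mono)

lemma conv_range: "0 \<le> (a::real) \<Longrightarrow> a \<le> 1 \<Longrightarrow> 0 \<le> x \<Longrightarrow> x \<le> 1 \<Longrightarrow> 0 \<le> y \<Longrightarrow> y \<le> 1
   \<Longrightarrow> 0 \<le> a * x + (1 - a) * y \<and> a * x + (1 - a) * y \<le> 1"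
proof -
  assume h: "0 \<le> a" "a \<le> 1" "0 \<le> x" "x \<le> 1" "0 \<le> y" "y \<le> 1"
  have "a * x \<le> a * 1" using h by (intro mult_left_mono) auto
  moreover have "(1 - a) * y \<le> (1 - a) * 1" using h by (intro mult_left_mono) auto
  ultimately show ?thesis using h by (simp add: mult_nonneg_nonneg)
qed

context
  fixes d :: nat and p q :: real
  assumes p: "0 \<le> p" "p \<le> 1" and q: "0 \<le> q" "q \<le> 1"
begin

lemma T_range:
  assumes "\<And>\<tau>. 0 \<le> v \<tau> \<and> v \<tau> \<le> 1"
  shows "0 \<le> T d p q v \<sigma> \<and> T d p q v \<sigma> \<le> 1"
  unfolding T_def
  by (rule h_range) (use conv_range[OF pr_bounds[OF p q, THEN conjunct1] pr_bounds[OF p q, THEN conjunct2]] assms in auto)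

lemma F_range: "0 \<le> F d p q n \<sigma> \<and> F d p q n \<sigma> \<le> 1"
proof (induction n arbitrary: \<sigma>)
  case 0 then show ?case by simp
next
  case (Suc n)
  show ?case unfolding F_Suc_T by (rule T_range) (rule Suc.IH)
qed

lemma T_mono:
  assumes "\<And>\<tau>. length \<tau> = length \<sigma> \<Longrightarrow> 0 \<le> v \<tau> \<and> v \<tau> \<le> w \<tau> \<and> w \<tau> \<le> 1" and "\<sigma> \<noteq> []"
  shows "T d p q v \<sigma> \<le> T d p q w \<sigma>"
proof -
  have l: "length (b # butlast \<sigma>) = length \<sigma>" for b using assms(2) by simp
  let ?a = "pr p q \<sigma>"
  have a: "0 \<le> ?a" "?a \<le> 1" using pr_bounds[OF p q] by auto
  have v1: "0 \<le> v (b # butlast \<sigma>)" "v (b # butlast \<sigma>) \<le> w (b # butlast \<sigma>)" "w (b # butlast \<sigma>) \<le> 1" for b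
    using assms(1)[OF l] by auto
  have "?a * v (True # butlast \<sigma>) \<le> ?a * w (True # butlast \<sigma>)" using a v1 by (intro mult_left_mono) auto
  moreover have "(1 - ?a) * v (False # butlast \<sigma>) \<le> (1 - ?a) * w (False # butlast \<sigma>)" using a v1 by (intro mult_left_mono) auto
  moreover have "0 \<le> ?a * v (True # butlast \<sigma>) + (1 - ?a) * v (False # butlast \<sigma>)"
    using conv_range[OF a, of "v (True # butlast \<sigma>)" "v (False # butlast \<sigma>)"] v1 by (meson order_trans)
  moreover have "?a * w (True # butlast \<sigma>) + (1 - ?a) * w (False # butlast \<sigma>) \<le> 1"
    using conv_range[OF a, of "w (True # butlast \<sigma>)" "w (False # butlast \<sigma>)"] v1 by (meson order_trans)
  ultimately show ?thesis unfolding T_def by (intro h_mono) auto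
qed

lemma F_dec:
  assumes k: "1 \<le> k"
  shows "length \<sigma> = k \<Longrightarrow> F d p q (Suc n) \<sigma> \<le> F d p q n \<sigma>"
proof (induction n arbitrary: \<sigma>)
  case 0
  show ?case
  proof (cases "True \<in> set \<sigma>")
    case True
    then show ?thesis using F_range[of "Suc 0" \<sigma>] by simp
  next
    case False
    have ne: "\<sigma> \<noteq> []" using 0 k by auto
    have "\<not> hd \<sigma>" using False ne by (metis hd_in_set)
    moreover have "\<not> last \<sigma>" using False ne by (metis last_in_set)
    ultimately have "pr p q \<sigma> = 0" by (simp add: pr_def)
    moreover have "True \<notin> set (False # butlast \<sigma>)" using False by (auto dest: in_set_butlastD)
    ultimately show ?thesis using False by simp
  qed
next
  case (Suc n)
  have ne: "\<sigma> \<noteq> []" using Suc.prems k by auto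
  have "T d p q (F d p q (Suc n)) \<sigma> \<le> T d p q (F d p q n) \<sigma>"
  proof (rule T_mono[OF _ ne])
    fix \<tau> :: "bool list" assume "length \<tau> = length \<sigma>"
    then show "0 \<le> F d p q (Suc n) \<tau> \<and> F d p q (Suc n) \<tau> \<le> F d p q n \<tau> \<and> F d p q n \<tau> \<le> 1"
      using Suc.IH[of \<tau>] Suc.prems F_range[of "Suc n" \<tau>] F_range[of n \<tau>] by (simp del: F.simps)
  qed
  then show ?case by (simp only: F_Suc_T[symmetric])
qed

definition fl :: "bool list \<Rightarrow> real" where "fl \<sigma> = lim (\<lambda>n. F d p q n \<sigma>)"

lemma fl_lim:
  assumes k: "1 \<le> k" and l: "length \<sigma> = k"
  shows "(\<lambda>n. F d p q n \<sigma>) \<longlonglongrightarrow> fl \<sigma>"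
proof -
  have dec: "decseq (\<lambda>n. F d p q n \<sigma>)" by (rule decseq_SucI) (rule F_dec[OF k l])
  have "Bseq (\<lambda>n. F d p q n \<sigma>)" by (rule BseqI'[of _ 1]) (use F_range in auto)
  then have "convergent (\<lambda>n. F d p q n \<sigma>)" using Bseq_monoseq_convergent decseq_imp_monoseq[OF dec] by blast
  then show ?thesis unfolding fl_def by (simp add: convergent_LIMSEQ_iff)
qed

lemma fl_le:
  assumes k: "1 \<le> k" and l: "length \<sigma> = k"
  shows "fl \<sigma> \<le> F d p q n \<sigma>"
  by (rule decseq_ge[OF _ fl_lim[OF k l]]) (rule decseq_SucI, rule F_dec[OF k l])

lemma fl_nonneg:
  assumes k: "1 \<le> k" and l: "length \<sigma> = k"
  shows "0 \<le> fl \<sigma>"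
  by (rule LIMSEQ_le_const[OF fl_lim[OF k l]]) (use F_range in auto)

lemma fl_fix:
  assumes k: "1 \<le> k" and l: "length \<sigma> = k"
  shows "fl \<sigma> = T d p q fl \<sigma>"
proof -
  have lb: "length (b # butlast \<sigma>) = k" for b using l k by auto
  have "(\<lambda>n. F d p q (Suc n) \<sigma>) \<longlonglongrightarrow> fl \<sigma>" by (rule LIMSEQ_Suc[OF fl_lim[OF k l]])
  moreover have "(\<lambda>n. F d p q (Suc n) \<sigma>) \<longlonglongrightarrow> T d p q fl \<sigma>"
    unfolding F_Suc_T T_def
    by (intro tendsto_intros fl_lim[OF k lb])
  ultimately show ?thesis by (rule LIMSEQ_unique)
qed

end


lemma conc_aux:
  fixes b :: real
  assumes b: "0 \<le> b" "b < 1" and n: "2 \<le> n"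
  shows "2 * ((1 + b) / 2) ^ n < 1 + b ^ n"
  using n
proof (induction n rule: nat_induct_at_least)
  case base
  have "0 < (1 - b) ^ 2" using b by simp
  then show ?case by (simp add: power2_eq_square algebra_simps)
next
  case (Suc n)
  have pos: "0 < (1 + b) / 2" using b by simp
  have "2 * ((1 + b) / 2) ^ Suc n = (2 * ((1 + b) / 2) ^ n) * ((1 + b) / 2)" by simp
  also have "\<dots> < (1 + b ^ n) * ((1 + b) / 2)"
    by (rule mult_strict_right_mono[OF Suc.IH pos])
  also have "\<dots> \<le> 1 + b ^ Suc n"
  proof -
    have "b ^ n \<le> 1" using b by (simp add: power_le_one)
    then have "0 \<le> (1 - b) * (1 - b ^ n)" using b by simp
    then show ?thesis by (simp add: algebra_simps)
  qed
  finally show ?case .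
qed

lemma conc:
  fixes x :: real
  assumes x: "0 < x" "x \<le> 1" and d: "2 \<le> d"
  shows "(1 - (1 - x) ^ d) / 2 < 1 - (1 - x / 2) ^ d"
proof -
  have "2 * ((1 + (1 - x)) / 2) ^ d < 1 + (1 - x) ^ d"
    by (rule conc_aux) (use x d in auto)
  moreover have e: "(1 + (1 - x)) / 2 = 1 - x / 2" by simp
  ultimately have "2 * (1 - x / 2) ^ d < 1 + (1 - x) ^ d" by (simp only: e)
  then show ?thesis by (simp add: field_simps)
qed

lemma bern_strict:
  fixes t :: real
  assumes t: "0 < t" "t \<le> 1" and n: "2 \<le> n"
  shows "1 - real n * t < (1 - t) ^ n"
proof -
  obtain m where m: "n = Suc m" "1 \<le> m" using n by (cases n) auto
  have b: "1 - real m * t \<le> (1 - t) ^ m"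
    using Bernoulli_inequality[of "- t" m] t by simp
  have "(1 - t) * (1 - real m * t) \<le> (1 - t) * (1 - t) ^ m"
    by (rule mult_left_mono[OF b]) (use t in simp)
  moreover have "1 - real n * t < (1 - t) * (1 - real m * t)"
  proof -
    have "0 < real m * t * t" using t m by simp
    then show ?thesis using m by (simp add: algebra_simps)
  qed
  ultimately show ?thesis using m by simp
qed

lemma bern_h:
  fixes y :: real
  assumes y: "0 < y" "y \<le> 1" and d: "2 \<le> d"
  shows "1 - (1 - y / d) ^ d < y"
proof -
  have "1 - real d * (y / d) < (1 - y / d) ^ d"
    by (rule bern_strict) (use y d in \<open>auto simp: field_simps\<close>)
  then show ?thesis using d by simp
qed

lemma pr_tendsto: "((\<lambda>q'. pr p q' \<sigma>) \<longlongrightarrow> pr p q \<sigma>) (at q within A)"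
  unfolding pr_def by (cases "hd \<sigma>"; cases "last \<sigma>") (simp_all, (intro tendsto_intros tendsto_ident_at)+)

lemma T_tendsto: "((\<lambda>q'. T d p q' v \<sigma>) \<longlongrightarrow> T d p q v \<sigma>) (at q within A)"
  unfolding T_def by (intro tendsto_intros pr_tendsto)

lemma finite_len: "finite {\<sigma> :: bool list. length \<sigma> = k}"
  using finite_lists_length_eq[of "UNIV :: bool set" k] by simp

lemma F0_indep: "F d p q 0 \<sigma> = F d p' q' 0 \<sigma>" by simp

lemma perturb:
  assumes d: "2 \<le> d" and k: "1 \<le> k" and p: "0 \<le> p" "p \<le> 1" and q: "0 < q" "q \<le> 1"
    and l0: "length \<sigma>0 = k"
  shows "\<exists>q'. 0 \<le> q' \<and> q' < q \<and> (\<forall>n. fl d p q \<sigma>0 / 2 \<le> F d p q' n \<sigma>0)"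
proof -
  let ?f = "fl d p q"
  define v where "v = (\<lambda>\<tau>::bool list. if length \<tau> = k then ?f \<tau> / 2 else 0)"
  define S where "S = {\<tau> :: bool list. length \<tau> = k}"
  have q': "0 \<le> q" "q \<le> 1" using q by auto
  have fb: "0 \<le> ?f \<tau> \<and> ?f \<tau> \<le> 1" if "length \<tau> = k" for \<tau>
    using fl_nonneg[OF p q' k that, where d=d] fl_le[OF p q' k that, where n=0 and d=d] F_range[OF p q', where n=0 and \<sigma>=\<tau> and d=d] by linarith
  have vb: "0 \<le> v \<tau> \<and> v \<tau> \<le> ?f \<tau> / 2" if "length \<tau> = k" for \<tau> using fb[OF that] that by (simp add: v_def)
  have vb': "0 \<le> v \<tau> \<and> v \<tau> \<le> 1" for \<tau>
  proof (cases "length \<tau> = k")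
    case True then show ?thesis using fb[OF True] by (simp add: v_def)
  next
    case False then show ?thesis by (simp add: v_def)
  qed
  have lsh: "length (b # butlast \<tau>) = k" if "length \<tau> = k" for b \<tau> using that k by auto
  have strict: "v \<tau> < T d p q v \<tau>" if \<tau>: "length \<tau> = k" "0 < ?f \<tau>" for \<tau>
  proof -
    define g where "g = pr p q \<tau> * ?f (True # butlast \<tau>) + (1 - pr p q \<tau>) * ?f (False # butlast \<tau>)"
    have fx: "?f \<tau> = 1 - (1 - g) ^ d" unfolding g_def using fl_fix[OF p q' k \<tau>(1)] by (simp add: T_def)
    have a: "0 \<le> pr p q \<tau>" "pr p q \<tau> \<le> 1" using pr_bounds[OF p q'] by auto
    have g1: "0 \<le> g \<and> g \<le> 1" unfolding g_def
      by (rule conv_range[OF a]) (use fb[OF lsh[OF \<tau>(1)]] in auto)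
    have "g \<noteq> 0" using fx \<tau>(2) by auto
    then have g0: "0 < g" using g1 by simp
    have vb2: "v (b # butlast \<tau>) = ?f (b # butlast \<tau>) / 2" for b
      unfolding v_def by (rule if_P[OF lsh[OF \<tau>(1)]])
    have inner: "pr p q \<tau> * (?f (True # butlast \<tau>) / 2) + (1 - pr p q \<tau>) * (?f (False # butlast \<tau>) / 2) = g / 2"
      unfolding g_def by (simp add: field_simps)
    have Tv: "T d p q v \<tau> = 1 - (1 - g / 2) ^ d"
      unfolding T_def vb2 inner by (rule refl)
    show ?thesis using conc[OF g0 _ d] g1 fx Tv \<tau>(1) by (simp add: v_def)
  qed
  have ev1: "eventually (\<lambda>q'. \<forall>\<tau>\<in>{\<tau>\<in>S. 0 < ?f \<tau>}. v \<tau> < T d p q' v \<tau>) (at_left q)"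
  proof (rule eventually_ball_finite)
    show "finite {\<tau>\<in>S. 0 < ?f \<tau>}" using finite_len[of k] unfolding S_def by simp
    show "\<forall>\<tau>\<in>{\<tau>\<in>S. 0 < ?f \<tau>}. eventually (\<lambda>q'. v \<tau> < T d p q' v \<tau>) (at_left q)"
      using strict by (auto simp: S_def intro!: order_tendstoD(1)[OF T_tendsto])
  qed
  have ev2: "eventually (\<lambda>q'. q' \<in> {0<..<q}) (at_left q)" by (rule eventually_at_left_real[OF q(1)])
  have "eventually (\<lambda>q'. q' \<in> {0<..<q} \<and> (\<forall>\<tau>\<in>{\<tau>\<in>S. 0 < ?f \<tau>}. v \<tau> < T d p q' v \<tau>)) (at_left q)"
    using eventually_conj[OF ev2 ev1] by simp
  then obtain q' where q'1: "q' \<in> {0<..<q}" and q'2: "\<forall>\<tau>\<in>{\<tau>\<in>S. 0 < ?f \<tau>}. v \<tau> < T d p q' v \<tau>"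
    using eventually_happens[of _ "at_left q"] trivial_limit_at_left_real by blast
  have pq': "0 \<le> q'" "q' \<le> 1" using q'1 q by auto
  have sub: "v \<tau> \<le> T d p q' v \<tau>" if "length \<tau> = k" for \<tau>
  proof (cases "0 < ?f \<tau>")
    case True then show ?thesis using q'2 that by (auto simp: S_def)
  next
    case False
    then have "v \<tau> = 0" using fb[OF that] that by (simp add: v_def)
    then show ?thesis using T_range[OF p pq' vb'] by simp
  qed
  have ind: "v \<tau> \<le> F d p q' n \<tau>" if "length \<tau> = k" for n \<tau>
    using that
  proof (induction n arbitrary: \<tau>)
    case 0
    have "?f \<tau> \<le> F d p q 0 \<tau>" by (rule fl_le[OF p q' k 0])
    then show ?case using vb[OF 0] fb[OF 0] by simp
  next
    case (Suc n)
    have ne: "\<tau> \<noteq> []" using Suc.prems k by auto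
    have "v \<tau> \<le> T d p q' v \<tau>" by (rule sub[OF Suc.prems])
    also have "\<dots> \<le> T d p q' (F d p q' n) \<tau>"
    proof (rule T_mono[OF p pq' _ ne])
      fix \<rho> :: "bool list" assume "length \<rho> = length \<tau>"
      then have "length \<rho> = k" using Suc.prems by simp
      then show "0 \<le> v \<rho> \<and> v \<rho> \<le> F d p q' n \<rho> \<and> F d p q' n \<rho> \<le> 1"
        using Suc.IH[of \<rho>] vb' F_range[OF p pq', where n=n and \<sigma>=\<rho> and d=d] by blast
    qed
    also have "\<dots> = F d p q' (Suc n) \<tau>" by (simp only: F_Suc_T)
    finally show ?case .
  qed
  show ?thesis
    using q'1 ind[OF l0] l0 by (intro exI[of _ q']) (auto simp: v_def)
qed


lemma F_q1:
  assumes d: "1 \<le> d" and k: "1 \<le> k"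
  shows "length \<sigma> = k \<Longrightarrow> True \<in> set \<sigma> \<Longrightarrow> F d p 1 n \<sigma> = 1"
proof (induction n arbitrary: \<sigma>)
  case 0 then show ?case by simp
next
  case (Suc n)
  have ne: "\<sigma> \<noteq> []" using Suc.prems k by auto
  have l: "length (b # butlast \<sigma>) = k" for b using Suc.prems k by auto
  have g: "pr p 1 \<sigma> * F d p 1 n (True # butlast \<sigma>) + (1 - pr p 1 \<sigma>) * F d p 1 n (False # butlast \<sigma>) = 1"
  proof (cases "last \<sigma>")
    case True
    then have "pr p 1 \<sigma> = 1" by (simp add: pr_def)
    moreover have "F d p 1 n (True # butlast \<sigma>) = 1" by (rule Suc.IH[OF l]) simp
    ultimately show ?thesis by simp
  next
    case False
    have "\<sigma> = butlast \<sigma> @ [last \<sigma>]" using ne by simp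
    then have "True \<in> set (butlast \<sigma>)" using Suc.prems(2) False by (metis Un_iff empty_iff empty_set list.set(2) set_append singletonD)
    then have "F d p 1 n (b # butlast \<sigma>) = 1" for b by (intro Suc.IH[OF l]) simp
    then show ?thesis by (simp add: algebra_simps)
  qed
  show ?case using d by (simp only: F.simps g) simp
qed

definition sh :: "bool list \<Rightarrow> bool list" where "sh \<sigma> = False # butlast \<sigma>"

lemma shpow:
  assumes l: "length \<sigma> = k"
  shows "j \<le> k \<Longrightarrow> (sh ^^ j) \<sigma> = replicate j False @ take (k - j) \<sigma>"
proof (induction j)
  case 0 then show ?case using l by simp
next
  case (Suc j)
  have ne: "take (k - j) \<sigma> \<noteq> []" using Suc.prems l by (cases \<sigma>) auto
  have ih: "(sh ^^ j) \<sigma> = replicate j False @ take (k - j) \<sigma>" using Suc.IH Suc.prems by simp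
  have "(sh ^^ Suc j) \<sigma> = sh ((sh ^^ j) \<sigma>)" by simp
  also have "\<dots> = False # butlast (replicate j False @ take (k - j) \<sigma>)"
    unfolding ih sh_def by (rule refl)
  also have "\<dots> = False # replicate j False @ take (k - Suc j) \<sigma>"
    using ne l Suc.prems by (simp add: butlast_append butlast_take)
  finally show ?case by simp
qed

context
  fixes d k :: nat and p :: real
  assumes d: "2 \<le> d" and k: "1 \<le> k" and p: "0 \<le> p" "p \<le> 1 / real d"
begin

lemma p1: "p \<le> 1"
proof -
  have "1 / real d \<le> 1" using d by simp
  then show ?thesis using p by linarith
qed

lemma q0: "0 \<le> (0::real)" "(0::real) \<le> 1" by simp_all

abbreviation "f0 \<equiv> fl d p 0"

lemma f0_props:
  assumes "length \<sigma> = k"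
  shows "0 \<le> f0 \<sigma>" "f0 \<sigma> \<le> F d p 0 0 \<sigma>" "f0 \<sigma> = T d p 0 f0 \<sigma>"
  using fl_nonneg[OF p(1) p1 q0 k assms] fl_le[OF p(1) p1 q0 k assms, where n=0] fl_fix[OF p(1) p1 q0 k assms]
  by auto

lemma f0_le1: "length \<sigma> = k \<Longrightarrow> f0 \<sigma> \<le> 1"
  using f0_props(2)[of \<sigma>] by (simp split: if_splits)

lemma pr0: "pr p 0 \<sigma> = (if hd \<sigma> then p else 0)"
  by (simp add: pr_def)

lemma f0_nohd:
  assumes l: "length \<sigma> = k" and h: "\<not> hd \<sigma>"
  shows "f0 \<sigma> = 0"
proof -
  have len: "length ((sh ^^ j) \<sigma>) = k" if "j \<le> k" for j using shpow[OF l that] l that by simp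
  have claim: "i \<le> k \<Longrightarrow> f0 ((sh ^^ (k - i)) \<sigma>) = 0" for i
  proof (induction i)
    case 0
    have "(sh ^^ k) \<sigma> = replicate k False" using shpow[OF l, of k] by simp
    moreover have "F d p 0 0 (replicate k False) = 0" by simp
    ultimately show ?case using f0_props[of "(sh ^^ k) \<sigma>"] len[of k] by simp
  next
    case (Suc i)
    define j where "j = k - Suc i"
    have j: "j < k" "Suc j = k - i" using Suc.prems unfolding j_def by auto
    let ?t = "(sh ^^ j) \<sigma>"
    have lt: "length ?t = k" using len j by simp
    have nh: "\<not> hd ?t"
    proof (cases j)
      case 0 then show ?thesis using h by simp
    next
      case (Suc j') then show ?thesis using shpow[OF l, of j] j by simp
    qed
    have ih: "f0 ((sh ^^ Suc j) \<sigma>) = 0" using Suc.IH Suc.prems j(2) by simp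
    have e: "(sh ^^ Suc j) \<sigma> = sh ?t" unfolding funpow.simps(2) comp_def by (rule refl)
    have nxt0: "f0 (False # butlast ?t) = 0" using ih unfolding e sh_def .
    have "f0 ?t = T d p 0 f0 ?t" by (rule f0_props(3)[OF lt])
    also have "\<dots> = 0" unfolding T_def pr0 using nh nxt0 by simp
    finally show ?case unfolding j_def .
  qed
  show ?thesis using claim[of k] by simp
qed

lemma f0_zero:
  assumes l: "length \<sigma> = k"
  shows "f0 \<sigma> = 0"
proof -
  define S where "S = {\<tau> :: bool list. length \<tau> = k}"
  have fin: "finite S" unfolding S_def by (rule finite_len)
  have ne: "S \<noteq> {}" unfolding S_def using l by blast
  define M where "M = Max (f0 ` S)"
  have Mge: "f0 \<tau> \<le> M" if "length \<tau> = k" for \<tau>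
    unfolding M_def using fin that by (intro Max_ge) (auto simp: S_def)
  have "M \<in> f0 ` S" unfolding M_def by (rule Max_in) (use fin ne in auto)
  then obtain \<sigma>s where s: "\<sigma>s \<in> S" "f0 \<sigma>s = M" by auto
  have ls: "length \<sigma>s = k" using s by (simp add: S_def)
  have "M \<le> 0"
  proof (rule ccontr)
    assume "\<not> M \<le> 0"
    then have M0: "0 < M" by simp
    have hs: "hd \<sigma>s" using f0_nohd[OF ls] s M0 by auto
    have lsh: "length (b # butlast \<sigma>s) = k" for b using ls k by auto
    have z: "f0 (False # butlast \<sigma>s) = 0" by (rule f0_nohd[OF lsh]) simp
    have "M = T d p 0 f0 \<sigma>s" using f0_props(3)[OF ls] s by simp
    also have "\<dots> = 1 - (1 - p * f0 (True # butlast \<sigma>s)) ^ d" unfolding T_def pr0 using hs z by simp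
    also have "\<dots> \<le> 1 - (1 - M / d) ^ d"
    proof (rule h_mono)
      show "0 \<le> p * f0 (True # butlast \<sigma>s)" using p f0_props(1)[OF lsh] by simp
      have "p * f0 (True # butlast \<sigma>s) \<le> (1 / d) * M"
        by (rule mult_mono) (use p Mge[OF lsh] M0 f0_props(1)[OF lsh] in auto)
      then show "p * f0 (True # butlast \<sigma>s) \<le> M / d" by simp
      show "M / d \<le> 1" using f0_le1[OF ls] s d by (simp add: field_simps)
    qed
    also have "\<dots> < M" by (rule bern_h[OF M0 _ d]) (use f0_le1[OF ls] s in simp)
    finally show False by simp
  qed
  then show ?thesis using Mge[OF l] f0_props(1)[OF l] by simp
qed

end


lemma valid_root: "1 \<le> k \<Longrightarrow> valid k [] (root0 k)"
  unfolding valid_def root0_def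
proof (intro conjI allI impI)
  assume k: "1 \<le> k"
  show "length (True # replicate (k - 1) False) = k" using k by simp
  fix i assume "i < k" "length ([]::nat list) < i"
  then show "\<not> (True # replicate (k - 1) False) ! i" by (cases i) auto
qed

lemma length_root0: "1 \<le> k \<Longrightarrow> length (root0 k) = k"
  by (simp add: root0_def)

context
  fixes d k :: nat and p q :: real
  assumes p: "0 \<le> p" "p \<le> 1" and q: "0 \<le> q" "q \<le> 1" and k: "1 \<le> k" and d: "1 \<le> d"
begin

interpretation bprod "edges d k" "Pb p q" .

definition AA :: "nat \<Rightarrow> (edge \<Rightarrow> bool) set" where
  "AA n = {\<omega>\<in>space PM. Ev d k [] (root0 k) n \<omega>}"

lemma AA_sets: "AA n \<in> sets PM"
  unfolding AA_def by (rule meas[OF Kset_sub finite_Kset Ev_dep]) simp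

lemma AA_meas: "measure PM (AA n) = F d p q n (root0 k)"
  unfolding AA_def by (rule main[OF p q k d _ valid_root[OF k]]) simp

lemma AA_dec: "decseq AA"
proof (rule decseq_SucI)
  fix n show "AA (Suc n) \<subseteq> AA n"
  proof
    fix \<omega> assume "\<omega> \<in> AA (Suc n)"
    then have s: "\<omega> \<in> space PM" and e: "Ev d k [] (root0 k) (Suc n) \<omega>" unfolding AA_def by auto
    have "Ev d k [] (root0 k) n \<omega>"
      unfolding Ev_root[OF k d] by (rule root_dec[OF k]) (use e in \<open>simp only: Ev_root[OF k d]\<close>)
    then show "\<omega> \<in> AA n" unfolding AA_def using s by blast
  qed
qed

lemma perc_Int: "perc_event d k \<inter> space PM = (\<Inter>n. AA n)"
proof -
  have "\<omega> \<in> perc_event d k \<longleftrightarrow> (\<forall>n. Ev d k [] (root0 k) n \<omega>)" for \<omega>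
    unfolding perc_event_def Ev_root[OF k d] using perc_iff[OF k] by simp
  then show ?thesis unfolding AA_def by blast
qed

lemma perc_sets: "perc_event d k \<inter> space PM \<in> sets PM"
  unfolding perc_Int using AA_sets by blast

lemma perc_lim: "(\<lambda>n. F d p q n (root0 k)) \<longlonglongrightarrow> measure PM (perc_event d k \<inter> space PM)"
proof -
  interpret prob_space PM by (rule ps)
  have "(\<lambda>n. measure PM (AA n)) \<longlonglongrightarrow> measure PM (\<Inter>n. AA n)"
    by (rule finite_Lim_measure_decseq) (use AA_sets AA_dec in auto)
  then show ?thesis unfolding AA_meas perc_Int .
qed

end

lemma perc_sets': "0 \<le> p \<Longrightarrow> p \<le> 1 \<Longrightarrow> 0 \<le> q \<Longrightarrow> q \<le> 1 \<Longrightarrow> 1 \<le> k \<Longrightarrow> 1 \<le> d \<Longrightarrow>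
  perc_event d k \<inter> space (perc d k p q) \<in> sets (perc d k p q)"
  unfolding perc_eq by (rule perc_sets)

lemma perc_lim': "0 \<le> p \<Longrightarrow> p \<le> 1 \<Longrightarrow> 0 \<le> q \<Longrightarrow> q \<le> 1 \<Longrightarrow> 1 \<le> k \<Longrightarrow> 1 \<le> d \<Longrightarrow>
  (\<lambda>n. F d p q n (root0 k)) \<longlonglongrightarrow> measure (perc d k p q) (perc_event d k \<inter> space (perc d k p q))"
  unfolding perc_eq by (rule perc_lim)

theorem theorem3:
  fixes d k :: nat and p :: real
  assumes "d \<ge> 2" and "k \<ge> 1" and "0 \<le> p" and "p \<le> 1 / real d"
  shows "perc_event d k \<inter> space (perc d k p (q_c d k p)) \<in> sets (perc d k p (q_c d k p))
     \<and> measure (perc d k p (q_c d k p)) (perc_event d k \<inter> space (perc d k p (q_c d k p))) = 0"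
proof -
  have d2: "2 \<le> d" and k: "1 \<le> k" and p0: "0 \<le> p" and pd: "p \<le> 1 / real d" using assms by auto
  have d: "1 \<le> d" using d2 by simp
  have p1: "p \<le> 1"
  proof -
    have "1 / real d \<le> 1" using d by simp
    then show ?thesis using pd by linarith
  qed
  define Q where "Q = {q. (p, q) \<in> Pk d k}"
  have qc: "q_c d k p = Inf Q" unfolding Q_def q_c_def by simp
  have Qnn: "0 \<le> x" if "x \<in> Q" for x using that unfolding Q_def Pk_def by auto
  have bdd: "bdd_below Q" using Qnn by (intro bdd_belowI) auto
  have PkI: "(p, q) \<in> Pk d k" if "0 \<le> q" "q \<le> 1" "0 < measure (perc d k p q) (perc_event d k \<inter> space (perc d k p q))" for q
    using that p0 p1 unfolding Pk_def by simp
  have one: "1 \<in> Q"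
  proof -
    have "(\<lambda>n. F d p 1 n (root0 k)) \<longlonglongrightarrow> measure (perc d k p 1) (perc_event d k \<inter> space (perc d k p 1))"
      by (rule perc_lim'[OF p0 p1 _ _ k d]) simp_all
    moreover have "(\<lambda>n. F d p 1 n (root0 k)) = (\<lambda>n. 1)"
      using F_q1[OF d k length_root0[OF k]] by (auto simp: root0_def)
    ultimately have "measure (perc d k p 1) (perc_event d k \<inter> space (perc d k p 1)) = 1"
      using LIMSEQ_unique tendsto_const by metis
    then show ?thesis unfolding Q_def by (intro CollectI PkI) simp_all
  qed
  define q0 where "q0 = q_c d k p"
  have q0le: "q0 \<le> 1" unfolding q0_def qc by (rule cInf_lower[OF one bdd])
  have q0ge: "0 \<le> q0" unfolding q0_def qc using one Qnn by (intro cInf_greatest) auto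
  define \<theta> where "\<theta> = measure (perc d k p q0) (perc_event d k \<inter> space (perc d k p q0))"
  have lim: "(\<lambda>n. F d p q0 n (root0 k)) \<longlonglongrightarrow> \<theta>"
    unfolding \<theta>_def by (rule perc_lim'[OF p0 p1 q0ge q0le k d])
  have fl_eq: "fl d p q0 (root0 k) = \<theta>"
    using LIMSEQ_unique[OF fl_lim[OF p0 p1 q0ge q0le k length_root0[OF k]] lim] .
  have "\<theta> = 0"
  proof (rule ccontr)
    assume "\<theta> \<noteq> 0"
    then have th: "0 < \<theta>" unfolding \<theta>_def by (simp add: zero_less_measure_iff)
    show False
    proof (cases "q0 = 0")
      case True
      have "fl d p 0 (root0 k) = 0" by (rule f0_zero[OF d2 k p0 pd length_root0[OF k]])
      then show False using fl_eq th True by simp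
    next
      case False
      then have q0p: "0 < q0" using q0ge by simp
      obtain q' where q': "0 \<le> q'" "q' < q0" "\<forall>n. fl d p q0 (root0 k) / 2 \<le> F d p q' n (root0 k)"
        using perturb[OF d2 k p0 p1 q0p q0le length_root0[OF k]] by blast
      have q'1: "q' \<le> 1" using q' q0le by simp
      have lim': "(\<lambda>n. F d p q' n (root0 k)) \<longlonglongrightarrow> measure (perc d k p q') (perc_event d k \<inter> space (perc d k p q'))"
        by (rule perc_lim'[OF p0 p1 q'(1) q'1 k d])
      have "\<theta> / 2 \<le> measure (perc d k p q') (perc_event d k \<inter> space (perc d k p q'))"
        by (rule LIMSEQ_le_const[OF lim']) (use q'(3) fl_eq in auto)
      then have "q' \<in> Q" unfolding Q_def using th by (intro CollectI PkI[OF q'(1) q'1]) simp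
      then have "q0 \<le> q'" unfolding q0_def qc by (rule cInf_lower[OF _ bdd])
      then show False using q'(2) by simp
    qed
  qed
  then show ?thesis
    using perc_sets'[OF p0 p1 q0ge q0le k d] unfolding \<theta>_def q0_def by simp
qed


end
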